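(* Let $(F_n)_{n\ge0}$ be the Fibonacci sequence ($F_0=0$, $F_1=1$, $F_{n+2}=F_{n+1}+F_n$) and $\Phi=(1+\sqrt5)/2$. For every fixed positive integer $m$, \[\log\mathrm{lcm}(F_n,F_{n+1},\dots,F_{n+m})\sim n(m+1)\log\Phi\quad\text{as } n\to+\infty.\] *)

theory Defs
  imports "HOL-Analysis.Analysis" "HOL-Number_Theory.Fib" "HOL-Library.Landau_Symbols"
begin

definition golden_ratio :: real where
  "golden_ratio = (1 + sqrt 5) / 2"

end

theory Submission
  imports Defs "HOL-Computational_Algebra.Factorial_Ring"
begin

lemma gr_sq: "golden_ratio ^ 2 = golden_ratio + 1"
  by (simp add: golden_ratio_def power2_eq_square field_simps)

lemma gr_gt1: "golden_ratio > 1"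
  by (simp add: golden_ratio_def)

lemma gr_le2: "golden_ratio \<le> 2"
proof -
  have "sqrt 5 \<le> 3" by (rule real_le_lsqrt) auto
  thus ?thesis by (simp add: golden_ratio_def)
qed

lemma fib_bounds_aux:
  "real (fib (Suc n)) \<le> golden_ratio ^ n \<and> golden_ratio ^ n \<le> real (fib (Suc (Suc n)))"
proof (induction n rule: less_induct)
  case (less n)
  show ?case
  proof (cases n)
    case 0
    then show ?thesis by simp
  next
    case (Suc k)
    show ?thesis
    proof (cases k)
      case 0
      have "fib (Suc (Suc (Suc 0))) = 2" by simp
      then show ?thesis using Suc 0 gr_gt1 gr_le2 by simp
    next
      case (Suc j)
      have n: "n = Suc (Suc j)" using Suc \<open>n = Suc k\<close> by simp
      have IH1: "real (fib (Suc j)) \<le> golden_ratio ^ j \<and> golden_ratio ^ j \<le> real (fib (Suc (Suc j)))"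
        using less.IH[of j] n by (metis lessI less_SucI)
      have IH2: "real (fib (Suc (Suc j))) \<le> golden_ratio ^ Suc j \<and> golden_ratio ^ Suc j \<le> real (fib (Suc (Suc (Suc j))))"
        using less.IH[of "Suc j"] n by (metis lessI)
      have f1: "real (fib (Suc (Suc (Suc j)))) = real (fib (Suc (Suc j))) + real (fib (Suc j))"
        by simp
      have f2: "real (fib (Suc (Suc (Suc (Suc j))))) = real (fib (Suc (Suc (Suc j)))) + real (fib (Suc (Suc j)))"
        by (simp only: fib.simps of_nat_add)
      have p: "golden_ratio ^ Suc (Suc j) = golden_ratio ^ Suc j + golden_ratio ^ j"
      proof -
        have "golden_ratio ^ Suc (Suc j) = golden_ratio ^ j * golden_ratio ^ 2"
          by (simp add: power_add[symmetric])
        also have "\<dots> = golden_ratio ^ j * (golden_ratio + 1)" by (simp only: gr_sq)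
        also have "\<dots> = golden_ratio ^ Suc j + golden_ratio ^ j" by (simp add: algebra_simps)
        finally show ?thesis .
      qed
      show ?thesis unfolding n using IH1 IH2 f1 f2 p by linarith
    qed
  qed
qed

lemma fib_upper: "i \<ge> 1 \<Longrightarrow> real (fib i) \<le> golden_ratio ^ (i - 1)"
  using fib_bounds_aux[of "i-1"] by (cases i) auto

lemma fib_lower: "i \<ge> 2 \<Longrightarrow> golden_ratio ^ (i - 2) \<le> real (fib i)"
proof -
  assume i: "i \<ge> 2"
  then obtain j where j: "i = Suc (Suc j)" by (metis add_2_eq_Suc le_Suc_ex)
  show ?thesis using fib_bounds_aux[of j] unfolding j by simp
qed

lemma fib_dvd: "a dvd b \<Longrightarrow> fib a dvd fib b"
  by (metis fib_gcd gcd_nat.absorb_iff1 gcd_nat.order_iff_strict dvd_refl gcd_dvd2 gcd_nat.absorb1)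

lemma gcd_Lcm_dvd:
  fixes x P :: nat
  assumes "finite A" "\<forall>a\<in>A. gcd x a dvd P"
  shows "gcd x (Lcm A) dvd P"
  using assms
proof (induction A rule: finite_induct)
  case empty then show ?case by simp
next
  case (insert a A)
  then show ?case by (simp add: gcd_lcm_distrib)
qed

lemma lower_aux:
  "\<exists>C::nat. C > 0 \<and> (\<forall>n. (\<Prod>i\<in>{n..n+k}. fib i) \<le> Lcm (fib ` {n..n+k}) * C)"
proof (induction k)
  case 0
  then show ?case by (intro exI[of _ 1]) simp
next
  case (Suc k)
  then obtain C :: nat where C: "C > 0" "\<And>n. (\<Prod>i\<in>{n..n+k}. fib i) \<le> Lcm (fib ` {n..n+k}) * C"
    by blast
  define P where "P = (\<Prod>j\<in>{1..Suc k}. fib j)"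
  have P0: "P > 0" unfolding P_def by (intro prod_pos) (auto intro: fib_neq_0_nat)
  have "(\<Prod>i\<in>{n..n+Suc k}. fib i) \<le> Lcm (fib ` {n..n+Suc k}) * (P * C)" for n
  proof -
    have S: "{n..n+Suc k} = insert (n + Suc k) {n..n+k}" by auto
    define a where "a = fib (n + Suc k)"
    define L where "L = Lcm (fib ` {n..n+k})"
    have g: "gcd a L dvd P" unfolding L_def
    proof (rule gcd_Lcm_dvd)
      show "\<forall>b\<in>fib ` {n..n + k}. gcd a b dvd P"
      proof
        fix b assume "b \<in> fib ` {n..n + k}"
        then obtain i where i: "i \<in> {n..n+k}" "b = fib i" by auto
        have "gcd a b = fib (gcd (n + Suc k) i)" unfolding a_def i(2) by (simp add: fib_gcd)
        moreover have "gcd (n + Suc k) i dvd (n + Suc k - i)"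
          using i(1) by (intro dvd_diff_nat) auto
        then have "fib (gcd (n + Suc k) i) dvd fib (n + Suc k - i)" by (rule fib_dvd)
        moreover have "fib (n + Suc k - i) dvd P"
          unfolding P_def using i(1) by (intro dvd_prodI) auto
        ultimately show "gcd a b dvd P" by (metis dvd_trans)
      qed
    qed simp
    have gl: "gcd a L \<le> P" using g P0 by (rule dvd_imp_le)
    have "gcd a L * lcm a L = a * L" by simp
    hence key: "a * L \<le> P * lcm a L" using gl by (metis mult_le_mono1)
    have "(\<Prod>i\<in>{n..n+Suc k}. fib i) = a * (\<Prod>i\<in>{n..n+k}. fib i)"
      unfolding S a_def by (subst prod.insert) auto
    also have "\<dots> \<le> a * (L * C)" unfolding L_def using C(2) by simp
    also have "\<dots> = (a * L) * C" by simp
    also have "\<dots> \<le> (P * lcm a L) * C" using key by simp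
    also have "lcm a L = Lcm (fib ` {n..n+Suc k})" unfolding S a_def L_def by simp
    finally show ?thesis by (simp add: mult_ac)
  qed
  then show ?case using C(1) P0 by (intro exI[of _ "P * C"]) auto
qed

theorem corollary3:
  fixes m :: nat
  assumes "m > 0"
  shows "(\<lambda>n. ln (real (Lcm (fib ` {n..n+m}))))
           \<sim>[at_top] (\<lambda>n. real n * real (m + 1) * ln golden_ratio)"
proof -
  obtain C :: nat where C: "C > 0" "\<And>n. (\<Prod>i\<in>{n..n+m}. fib i) \<le> Lcm (fib ` {n..n+m}) * C"
    using lower_aux[of m] by blast
  define c where "c = ln golden_ratio"
  have c0: "c > 0" unfolding c_def using gr_gt1 by simp
  define f where "f = (\<lambda>n. ln (real (Lcm (fib ` {n..n+m}))))"
  define g where "g = (\<lambda>n::nat. real n * real (m + 1) * c)"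
  define K where "K = real (m+1) * real m * c + 2 * real (m+1) * c + \<bar>ln (real C)\<bar>"
  have bound: "\<bar>f n - g n\<bar> \<le> K" if n2: "n \<ge> 2" for n
  proof -
    define Q where "Q = (\<Prod>i\<in>{n..n+m}. fib i)"
    have fpos: "\<And>i. i \<in> {n..n+m} \<Longrightarrow> fib i > 0" using n2 by (intro fib_neq_0_nat) auto
    have Q0: "Q > 0" unfolding Q_def using fpos by (intro prod_pos) auto
    have Ldvd: "Lcm (fib ` {n..n+m}) dvd Q" unfolding Q_def
      by (rule Lcm_least) (auto intro: dvd_prodI)
    have L0: "Lcm (fib ` {n..n+m}) > 0"
      using Ldvd Q0 by (metis dvd_0_left_iff gr0I less_not_refl2)
    have LQ: "Lcm (fib ` {n..n+m}) \<le> Q" using Ldvd Q0 by (rule dvd_imp_le)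
    have lnQ: "ln (real Q) = (\<Sum>i\<in>{n..n+m}. ln (real (fib i)))"
      unfolding Q_def of_nat_prod using fpos by (subst ln_prod) auto
    have up: "ln (real (fib i)) \<le> (real n + real m) * c" if i: "i \<in> {n..n+m}" for i
    proof -
      have "ln (real (fib i)) \<le> ln (golden_ratio ^ (i - 1))"
        using fpos[OF i] fib_upper[of i] i n2 by (subst ln_le_cancel_iff) auto
      also have "\<dots> = real (i - 1) * c" unfolding c_def using gr_gt1 by (simp add: ln_realpow)
      also have "\<dots> \<le> (real n + real m) * c" using c0 i by (intro mult_right_mono) auto
      finally show ?thesis .
    qed
    have lo: "(real n - 2) * c \<le> ln (real (fib i))" if i: "i \<in> {n..n+m}" for i
    proof -
      have "(real n - 2) * c \<le> real (i - 2) * c" using c0 i n2 by (intro mult_right_mono) auto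
      also have "\<dots> = ln (golden_ratio ^ (i - 2))" unfolding c_def using gr_gt1 by (simp add: ln_realpow)
      also have "\<dots> \<le> ln (real (fib i))"
        using fpos[OF i] fib_lower[of i] i n2 gr_gt1 by (subst ln_le_cancel_iff) auto
      finally show ?thesis .
    qed
    have cardI: "card {n..n+m} = m + 1" by simp
    have s1: "ln (real Q) \<le> real (m+1) * ((real n + real m) * c)"
      unfolding lnQ using sum_mono[OF up, of "{n..n+m}"] cardI by simp
    have s2: "real (m+1) * ((real n - 2) * c) \<le> ln (real Q)"
      unfolding lnQ using sum_mono[OF lo, of "{n..n+m}"] cardI by simp
    have f1: "f n \<le> ln (real Q)" unfolding f_def using L0 LQ by simp
    have "real Q \<le> real (Lcm (fib ` {n..n+m})) * real C"
      using C(2)[of n] unfolding Q_def by (metis of_nat_le_iff of_nat_mult)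
    hence "ln (real Q) \<le> ln (real (Lcm (fib ` {n..n+m})) * real C)"
      using Q0 by (subst ln_le_cancel_iff) auto
    also have "\<dots> = f n + ln (real C)" unfolding f_def using L0 C(1) by (subst ln_mult) auto
    finally have f2: "ln (real Q) \<le> f n + ln (real C)" .
    have e1: "real (m+1) * ((real n + real m) * c) = g n + real (m+1) * real m * c"
      unfolding g_def by (simp only: distrib_left distrib_right mult_ac)
    have e2: "real (m+1) * ((real n - 2) * c) = g n - 2 * real (m+1) * c"
      unfolding g_def by (simp only: left_diff_distrib right_diff_distrib mult_ac)
    have k1: "0 \<le> 2 * real (m+1) * c" using c0 by simp
    have k2: "0 \<le> real (m+1) * real m * c" using c0 by simp
    have "f n - g n \<le> K" using f1 s1 e1 k1 unfolding K_def by linarith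
    moreover have "g n - f n \<le> K" using f2 s2 e2 k2 unfolding K_def by linarith
    ultimately show ?thesis by linarith
  qed
  have "(\<lambda>n. f n / g n) \<longlonglongrightarrow> 1"
  proof -
    have lim0: "(\<lambda>n. (K / (real (m+1) * c)) * inverse (real n)) \<longlonglongrightarrow> 0"
      by (intro tendsto_mult_right_zero lim_inverse_n)
    have "(\<lambda>n. (f n - g n) / g n) \<longlonglongrightarrow> 0"
    proof (rule Lim_null_comparison[OF _ lim0])
      show "\<forall>\<^sub>F n in sequentially. norm ((f n - g n) / g n) \<le> K / (real (m+1) * c) * inverse (real n)"
        using eventually_ge_at_top[of 2]
      proof eventually_elim
        case (elim n)
        have gp: "g n > 0" unfolding g_def using elim c0 by simp
        have "norm ((f n - g n) / g n) = \<bar>f n - g n\<bar> / g n" using gp by simp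
        also have "\<dots> \<le> K / g n" using bound[OF elim] gp by (intro divide_right_mono) auto
        also have "\<dots> = K / (real (m+1) * c) * inverse (real n)"
          unfolding g_def using elim by (simp add: field_simps)
        finally show ?case .
      qed
    qed
    hence "(\<lambda>n. 1 + (f n - g n) / g n) \<longlonglongrightarrow> 1 + 0" by (intro tendsto_add tendsto_const)
    moreover have "\<forall>\<^sub>F n in sequentially. 1 + (f n - g n) / g n = f n / g n"
      using eventually_ge_at_top[of 1]
    proof eventually_elim
      case (elim n)
      have "g n \<noteq> 0" unfolding g_def using elim c0 by simp
      thus ?case by (simp add: field_simps)
    qed
    ultimately show ?thesis by (simp add: tendsto_cong)
  qed
  hence "f \<sim>[at_top] g" by (rule asymp_equivI')
  thus ?thesis unfolding f_def g_def c_def .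
qed

end
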